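(* If $l = 1$, then the hypergraph $\mathcal{H}$ (defined in the context) is $C_3$-free, i.e. there do not exist three distinct edges $E_1,E_2,E_3$ of $\mathcal{H}$ and three distinct vertices $v_1,v_2,v_3$ with $\{v_1,v_2\}\subseteq E_1$, $\{v_2,v_3\}\subseteq E_2$, $\{v_3,v_1\}\subseteq E_3$.
   Context: Let $r \geq 2$ and $l \geq 1$ be integers and $q$ a power of an odd prime. Let $\alpha_1, \dots, \alpha_r$ be distinct elements of $\mathbb{F}_q$, and let $m_1, \dots, m_l$ be distinct elements of $\mathbb{F}_q^* = \mathbb{F}_q\setminus\{0\}$ such that $m_s(\alpha_k - \alpha_i) \neq m_t(\alpha_k - \alpha_j)$ whenever $1 \leq s,t \leq l$ and $i,j,k$ are distinct integers in $\{1,\dots,r\}$. For $1 \leq i \leq r$ let $V_i = \mathbb{F}_q \times \mathbb{F}_q \times \{i\}$. For $x,y \in \mathbb{F}_q$, $a \in \mathbb{F}_q^*$, $s \in \{1,\dots,l\}$ let \[ e(x,y,a,m_s) = \{(x + \alpha_i m_s a,\; y + \alpha_i m_s a^2,\; i) : 1 \leq i \leq r\}. \] $\mathcal{H}$ is the $r$-uniform hypergraph with vertex set $V_1 \cup \dots \cup V_r$ and edge set $\{e(x,y,a,m_s) : x,y \in \mathbb{F}_q,\ a \in \mathbb{F}_q^*,\ 1 \leq s \leq l\}$. A hypergraph is $C_3$-free if it contains no Berge triangle (three distinct edges and three distinct vertices as described in the claim). *)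

theory Defs
  imports "HOL-Computational_Algebra.Primes"
begin

definition hedge :: "(nat \<Rightarrow> 'a::field) \<Rightarrow> nat \<Rightarrow> 'a \<Rightarrow> 'a \<Rightarrow> 'a \<Rightarrow> 'a \<Rightarrow> ('a \<times> 'a \<times> nat) set" where
  "hedge \<alpha> r x y a ms = {(x + \<alpha> i * ms * a, y + \<alpha> i * ms * a ^ 2, i) | i. i \<in> {1..r}}"

definition hedges :: "(nat \<Rightarrow> 'a::field) \<Rightarrow> nat \<Rightarrow> (nat \<Rightarrow> 'a) \<Rightarrow> nat \<Rightarrow> ('a \<times> 'a \<times> nat) set set" where
  "hedges \<alpha> r m l = {hedge \<alpha> r x y a (m s) | x y a s. a \<noteq> 0 \<and> s \<in> {1..l}}"

definition berge_C3_free :: "'v set set \<Rightarrow> bool" where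
  "berge_C3_free E \<longleftrightarrow>
     \<not> (\<exists>E1 E2 E3 v1 v2 v3. E1 \<in> E \<and> E2 \<in> E \<and> E3 \<in> E \<and>
          E1 \<noteq> E2 \<and> E2 \<noteq> E3 \<and> E1 \<noteq> E3 \<and>
          v1 \<noteq> v2 \<and> v2 \<noteq> v3 \<and> v1 \<noteq> v3 \<and>
          {v1, v2} \<subseteq> E1 \<and> {v2, v3} \<subseteq> E2 \<and> {v3, v1} \<subseteq> E3)"

end

theory Submission
  imports Defs
begin

lemma key:
  fixes P Q R \<mu> x1 x2 x3 y1 y2 y3 a1 a2 a3 :: "'a::field"
  assumes "P \<noteq> Q" "Q \<noteq> R" "P \<noteq> R" "\<mu> \<noteq> 0"
   and u1: "x1 + P*\<mu>*a1 = x3 + P*\<mu>*a3" and u2: "x1 + Q*\<mu>*a1 = x2 + Q*\<mu>*a2"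
   and u3: "x2 + R*\<mu>*a2 = x3 + R*\<mu>*a3"
   and w1: "y1 + P*\<mu>*a1^2 = y3 + P*\<mu>*a3^2" and w2: "y1 + Q*\<mu>*a1^2 = y2 + Q*\<mu>*a2^2"
   and w3: "y2 + R*\<mu>*a2^2 = y3 + R*\<mu>*a3^2"
  shows "a1 = a2 \<and> a2 = a3"
proof -
  have e1: "x1 - x3 = P*\<mu>*a3 - P*\<mu>*a1" using u1 by (simp add: algebra_simps)
  have e2: "x1 - x2 = Q*\<mu>*a2 - Q*\<mu>*a1" using u2 by (simp add: algebra_simps)
  have e3: "x2 - x3 = R*\<mu>*a3 - R*\<mu>*a2" using u3 by (simp add: algebra_simps)
  have "x1 - x3 = (x1 - x2) + (x2 - x3)" by simp
  hence "P*\<mu>*a3 - P*\<mu>*a1 = (Q*\<mu>*a2 - Q*\<mu>*a1) + (R*\<mu>*a3 - R*\<mu>*a2)" using e1 e2 e3 by simp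
  hence "\<mu> * ((P-R)*(a3-a2) - (Q-P)*(a2-a1)) = 0" by (simp add: algebra_simps)
  hence h1: "(P-R)*(a3-a2) = (Q-P)*(a2-a1)" using assms(4) by simp
  have f1: "y1 - y3 = P*\<mu>*a3^2 - P*\<mu>*a1^2" using w1 by (simp add: algebra_simps)
  have f2: "y1 - y2 = Q*\<mu>*a2^2 - Q*\<mu>*a1^2" using w2 by (simp add: algebra_simps)
  have f3: "y2 - y3 = R*\<mu>*a3^2 - R*\<mu>*a2^2" using w3 by (simp add: algebra_simps)
  have "y1 - y3 = (y1 - y2) + (y2 - y3)" by simp
  hence "P*\<mu>*a3^2 - P*\<mu>*a1^2 = (Q*\<mu>*a2^2 - Q*\<mu>*a1^2) + (R*\<mu>*a3^2 - R*\<mu>*a2^2)" using f1 f2 f3 by simp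
  hence "\<mu> * ((P-R)*(a3-a2)*(a3+a2) - (Q-P)*(a2-a1)*(a2+a1)) = 0"
    by (simp add: algebra_simps power2_eq_square)
  hence h2: "(P-R)*(a3-a2)*(a3+a2) = (Q-P)*(a2-a1)*(a2+a1)" using assms(4) by simp
  have "(Q-P)*((a2-a1)*(a3-a1)) = 0"
  proof -
    have "(Q-P)*(a2-a1)*(a3+a2) = (Q-P)*(a2-a1)*(a2+a1)" using h1 h2 by metis
    thus ?thesis by (simp add: algebra_simps)
  qed
  hence "a2 = a1 \<or> a3 = a1" using assms(1) by auto
  thus ?thesis
  proof
    assume "a2 = a1" thus ?thesis using h1 assms(3) by simp
  next
    assume e: "a3 = a1"
    have "(Q-R)*(a3-a2) = 0" using h1 e by (simp add: algebra_simps)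
    thus ?thesis using e assms(2) by simp
  qed
qed

lemma mem_hedge2:
  assumes "v \<in> hedge \<alpha> r x y a \<mu>"
  shows "snd (snd v) \<in> {1..r} \<and> fst v = x + \<alpha> (snd (snd v))*\<mu>*a \<and> fst (snd v) = y + \<alpha> (snd(snd v))*\<mu>*a^2"
  using assms by (auto simp: hedge_def)

lemma same_layer:
  assumes "v \<in> hedge \<alpha> r x y a \<mu>" "w \<in> hedge \<alpha> r x y a \<mu>" "snd (snd v) = snd (snd w)"
  shows "v = w"
  using mem_hedge2[OF assms(1)] mem_hedge2[OF assms(2)] assms(3) by (simp add: prod_eq_iff)

theorem lemma3p6:
  fixes \<alpha> :: "nat \<Rightarrow> 'a::{field,finite}" and m :: "nat \<Rightarrow> 'a" and r l :: nat
  assumes q: "\<exists>p k. prime p \<and> odd p \<and> k \<ge> 1 \<and> card (UNIV :: 'a set) = p ^ k"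
    and r: "r \<ge> 2" and l1: "l \<ge> 1"
    and alpha_inj: "inj_on \<alpha> {1..r}"
    and m_inj: "inj_on m {1..l}"
    and m_nz: "\<forall>s\<in>{1..l}. m s \<noteq> 0"
    and cond: "\<forall>s\<in>{1..l}. \<forall>t\<in>{1..l}. \<forall>i\<in>{1..r}. \<forall>j\<in>{1..r}. \<forall>k\<in>{1..r}.
                 i \<noteq> j \<and> j \<noteq> k \<and> i \<noteq> k \<longrightarrow>
                 m s * (\<alpha> k - \<alpha> i) \<noteq> m t * (\<alpha> k - \<alpha> j)"
    and l_eq: "l = 1"
  shows "berge_C3_free (hedges \<alpha> r m l)"
  unfolding berge_C3_free_def
proof (rule notI, elim exE conjE)
  fix E1 E2 E3 v1 v2 v3
  assume E1: "E1 \<in> hedges \<alpha> r m l" and E2: "E2 \<in> hedges \<alpha> r m l" and E3: "E3 \<in> hedges \<alpha> r m l"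
    and d12: "E1 \<noteq> E2" and d23: "E2 \<noteq> E3" and d13: "E1 \<noteq> E3"
    and n12: "v1 \<noteq> v2" and n23: "v2 \<noteq> v3" and n13: "v1 \<noteq> v3"
    and s1: "{v1, v2} \<subseteq> E1" and s2: "{v2, v3} \<subseteq> E2" and s3: "{v3, v1} \<subseteq> E3"
  define \<mu> where "\<mu> = m 1"
  have mu: "\<mu> \<noteq> 0" using m_nz l_eq by (simp add: \<mu>_def)
  obtain x1 y1 a1 where e1: "E1 = hedge \<alpha> r x1 y1 a1 \<mu>" using E1 l_eq by (auto simp: hedges_def \<mu>_def)
  obtain x2 y2 a2 where e2: "E2 = hedge \<alpha> r x2 y2 a2 \<mu>" using E2 l_eq by (auto simp: hedges_def \<mu>_def)
  obtain x3 y3 a3 where e3: "E3 = hedge \<alpha> r x3 y3 a3 \<mu>" using E3 l_eq by (auto simp: hedges_def \<mu>_def)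
  define i where "i = snd (snd v1)"
  define j where "j = snd (snd v2)"
  define k where "k = snd (snd v3)"
  have m11: "v1 \<in> E1" and m21: "v2 \<in> E1" and m22: "v2 \<in> E2" and m32: "v3 \<in> E2"
    and m33: "v3 \<in> E3" and m13: "v1 \<in> E3" using s1 s2 s3 by auto
  have ij: "i \<noteq> j" using same_layer[OF m11[unfolded e1] m21[unfolded e1]] n12 by (auto simp: i_def j_def)
  have jk: "j \<noteq> k" using same_layer[OF m22[unfolded e2] m32[unfolded e2]] n23 by (auto simp: k_def j_def)
  have ik: "i \<noteq> k" using same_layer[OF m13[unfolded e3] m33[unfolded e3]] n13 by (auto simp: i_def k_def)
  note A11 = mem_hedge2[OF m11[unfolded e1], folded i_def]
  note A21 = mem_hedge2[OF m21[unfolded e1], folded j_def]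
  note A22 = mem_hedge2[OF m22[unfolded e2], folded j_def]
  note A32 = mem_hedge2[OF m32[unfolded e2], folded k_def]
  note A33 = mem_hedge2[OF m33[unfolded e3], folded k_def]
  note A13 = mem_hedge2[OF m13[unfolded e3], folded i_def]
  have PQ: "\<alpha> i \<noteq> \<alpha> j" using ij A11 A21 alpha_inj by (meson inj_on_def)
  have QR: "\<alpha> j \<noteq> \<alpha> k" using jk A22 A32 alpha_inj by (meson inj_on_def)
  have PR: "\<alpha> i \<noteq> \<alpha> k" using ik A11 A33 alpha_inj by (meson inj_on_def)
  have aa: "a1 = a2 \<and> a2 = a3"
    apply (rule key[OF PQ QR PR mu, of x1 a1 x3 a3 x2 a2 y1 y3 y2])
    using A11 A21 A22 A32 A33 A13 by metis+
  have "x1 = x3" using A11 A13 aa by simp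
  moreover have "y1 = y3" using A11 A13 aa by simp
  ultimately have "E1 = E3" using e1 e3 aa by simp
  thus False using d13 by simp
qed

end
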